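(* Let $q$ be a prime power and $n\ge 3$. Let $\mathcal{L}$ be a set of lines of $\mathrm{AG}(n,q)$ such that for some $x$, every line spread $\mathcal{S}$ of $\mathrm{AG}(n,q)$ satisfies $|\mathcal{L}\cap\mathcal{S}|=x$. Then $\mathcal{L}$ is a Cameron-Liebler line class of $\mathrm{AG}(n,q)$ with parameter $x$.
   Context: $\mathrm{AG}(n,q)$ is $\mathrm{PG}(n,q)$ with a hyperplane $\pi_\infty$ removed; affine points are points outside $\pi_\infty$, (affine) lines are projective lines not contained in $\pi_\infty$. A line spread of $\mathrm{AG}(n,q)$ is a set of affine lines pairwise sharing no affine point and covering all affine points. With $A_n$ the incidence matrix of affine points versus affine lines, a set $\mathcal{L}$ of affine lines is a Cameron-Liebler line class of $\mathrm{AG}(n,q)$ if its characteristic vector lies in the real row space $\mathrm{Im}(A_n^T)$; its parameter is $|\mathcal{L}|(q-1)/(q^n-1)$. *)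

theory Defs
  imports "HOL-Analysis.Finite_Cartesian_Product"
begin

text \<open>AG(n,q) in coordinates: affine points are the vectors of GF(q)^n (here 'a ^ 'n for a
finite field 'a with q = CARD('a), and n = CARD('n)); affine lines are the sets p + <v>, v nonzero.\<close>

definition aff_lines :: "(('a::{finite,field}) ^ ('n::finite)) set set" where
  "aff_lines = {{p + t *s v | t. True} | p v. v \<noteq> 0}"

definition is_line_spread :: "(('a::{finite,field}) ^ ('n::finite)) set set \<Rightarrow> bool" where
  "is_line_spread S \<longleftrightarrow> S \<subseteq> aff_lines
     \<and> (\<forall>l\<in>S. \<forall>m\<in>S. l \<noteq> m \<longrightarrow> l \<inter> m = {})
     \<and> \<Union>S = UNIV"

text \<open>Incidence matrix A_n: rows = affine points, columns = affine lines.
The characteristic vector of L lies in Im(A_n^T) iff it equals A_n^T c for some real vector c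
indexed by points, i.e. chi_L(l) = sum_P A(P,l) c(P) for every affine line l.\<close>

definition incid :: "('a::{finite,field}) ^ ('n::finite) \<Rightarrow> ('a ^ 'n) set \<Rightarrow> real" where
  "incid P l = (if P \<in> l then 1 else 0)"

definition CL_line_class :: "(('a::{finite,field}) ^ ('n::finite)) set set \<Rightarrow> bool" where
  "CL_line_class L \<longleftrightarrow> L \<subseteq> aff_lines \<and>
     (\<exists>c :: 'a ^ 'n \<Rightarrow> real. \<forall>l\<in>aff_lines.
        (if l \<in> L then 1 else 0) = (\<Sum>P\<in>UNIV. incid P l * c P))"

definition CL_parameter :: "(('a::{finite,field}) ^ ('n::finite)) set set \<Rightarrow> real" where
  "CL_parameter L = real (card L) * (real CARD('a) - 1) / (real CARD('a) ^ CARD('n) - 1)"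

end

theory Submission
  imports Defs
begin


definition line :: "('a::{finite,field})^('n::finite) \<Rightarrow> 'a^'n \<Rightarrow> ('a^'n) set" where
  "line p v = {p + t *s v | t. True}"
definition Par :: "('a::{finite,field})^('n::finite) \<Rightarrow> ('a^'n) set set" where
  "Par v = range (\<lambda>p. line p v)"
definition sp1 :: "('a::{finite,field})^('n::finite) \<Rightarrow> ('a^'n) set" where
  "sp1 v = range (\<lambda>t. t *s v)"
definition plane :: "('a::{finite,field})^('n::finite) \<Rightarrow> 'a^'n \<Rightarrow> 'a^'n \<Rightarrow> ('a^'n) set" where
  "plane p v w = {p + a *s v + b *s w | a b. True}"

lemma aff_lines_eq: "aff_lines = {line p v | p v. v \<noteq> 0}"
  unfolding aff_lines_def line_def by simp

lemma line_mem: "y \<in> line p v \<longleftrightarrow> (\<exists>t. y = p + t *s v)"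
  by (auto simp: line_def)

lemma line_self: "p \<in> line p v"
  unfolding line_mem by (rule exI[of _ 0]) simp

lemma line_eq: assumes "y \<in> line p v" shows "line y v = line p v"
proof -
  obtain a where a: "y = p + a *s v" using assms line_mem by blast
  show ?thesis
  proof (rule set_eqI)
    fix z
    show "z \<in> line y v \<longleftrightarrow> z \<in> line p v"
      unfolding line_mem a
    proof
      assume "\<exists>t. z = p + a *s v + t *s v"
      then obtain t where "z = p + a *s v + t *s v" by blast
      then have "z = p + (a + t) *s v" by (simp add: vector_sadd_rdistrib add.assoc)
      then show "\<exists>t. z = p + t *s v" by blast
    next
      assume "\<exists>t. z = p + t *s v"
      then obtain t where "z = p + t *s v" by blast
      then have "z = p + a *s v + (t - a) *s v" by (simp add: vector_sub_rdistrib)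
      then show "\<exists>t. z = p + a *s v + t *s v" by blast
    qed
  qed
qed

lemma line_card: assumes "(v::('a::{finite,field})^('n::finite)) \<noteq> 0"
  shows "card (line p v) = CARD('a)"
proof -
  have "line p v = (\<lambda>t. p + t *s v) ` UNIV" by (auto simp: line_def)
  moreover have "inj (\<lambda>t. p + t *s v)" using assms by (auto intro: injI)
  ultimately show ?thesis by (simp add: card_image)
qed

lemma line_dir: assumes "line r w = line p u" shows "w \<in> sp1 u"
proof -
  have "r \<in> line p u" using assms line_self by metis
  moreover have "r + w \<in> line p u" using assms unfolding line_mem[symmetric]
    by (metis line_mem vector_smult_lid)
  ultimately obtain a b where "r = p + a *s u" "r + w = p + b *s u" unfolding line_mem by blast
  then have "w = (b - a) *s u" by (simp add: vector_sub_rdistrib algebra_simps)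
  then show ?thesis unfolding sp1_def by blast
qed

lemma line_scale: assumes "(t::'a::{finite,field}) \<noteq> 0"
  shows "line p (t *s (v::'a^'n::finite)) = line p v"
proof (rule set_eqI)
  fix z
  show "z \<in> line p (t *s v) \<longleftrightarrow> z \<in> line p v"
    unfolding line_mem
  proof
    assume "\<exists>s. z = p + s *s (t *s v)"
    then show "\<exists>s. z = p + s *s v" by (auto simp: vector_smult_assoc)
  next
    assume "\<exists>s. z = p + s *s v"
    then obtain s where "z = p + s *s v" by blast
    then have "z = p + (s / t) *s (t *s v)" using assms by (simp add: vector_smult_assoc)
    then show "\<exists>s. z = p + s *s (t *s v)" by blast
  qed
qed

lemma Par_scale: assumes "(t::'a::{finite,field}) \<noteq> 0"
  shows "Par (t *s (v::'a^'n::finite)) = Par v"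
  unfolding Par_def by (rule arg_cong[where f=range], rule ext, rule line_scale[OF assms])

lemma line_in_Par: "line p u \<in> Par w \<longleftrightarrow> (\<exists>r. line r w = line p u)"
  unfolding Par_def by auto

lemma dirs_eq: assumes "u \<noteq> 0"
  shows "{w. w \<noteq> 0 \<and> line p u \<in> Par w} = (\<lambda>t. t *s u) ` (- {0})"
proof (rule set_eqI)
  fix w
  show "w \<in> {w. w \<noteq> 0 \<and> line p u \<in> Par w} \<longleftrightarrow> w \<in> (\<lambda>t. t *s u) ` (- {0})"
  proof
    assume "w \<in> {w. w \<noteq> 0 \<and> line p u \<in> Par w}"
    then obtain r where "w \<noteq> 0" "line r w = line p u" using line_in_Par by blast
    then obtain t where "w = t *s u" using line_dir unfolding sp1_def by blast
    with \<open>w \<noteq> 0\<close> show "w \<in> (\<lambda>t. t *s u) ` (- {0})" by auto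
  next
    assume "w \<in> (\<lambda>t. t *s u) ` (- {0})"
    then obtain t where t: "t \<noteq> 0" "w = t *s u" by auto
    then have "line p w = line p u" using line_scale by simp
    then have "line p u \<in> Par w" unfolding Par_def by (metis rangeI)
    then show "w \<in> {w. w \<noteq> 0 \<and> line p u \<in> Par w}" using t assms by auto
  qed
qed

lemma card_dirs: assumes "(u::('a::{finite,field})^('n::finite)) \<noteq> 0"
  shows "card {w. w \<noteq> 0 \<and> line p u \<in> Par w} = CARD('a) - 1"
proof -
  have "inj_on (\<lambda>t::'a. t *s u) (- {0})" using assms by (auto intro: inj_onI)
  then have "card ((\<lambda>t::'a. t *s u) ` (- {0})) = card (- {0::'a})" by (rule card_image)
  also have "\<dots> = CARD('a) - 1" by (simp add: Compl_eq_Diff_UNIV card_Diff_singleton)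
  finally show ?thesis using dirs_eq[OF assms] by simp
qed

lemma card_sp1: assumes "(v::('a::{finite,field})^('n::finite)) \<noteq> 0"
  shows "card (sp1 v) = CARD('a)"
proof -
  have "inj (\<lambda>t::'a. t *s v)" using assms by (auto intro: injI)
  then show ?thesis unfolding sp1_def by (simp add: card_image)
qed

lemma Par_spread: assumes "v \<noteq> 0" shows "is_line_spread (Par v)"
  unfolding is_line_spread_def
proof (intro conjI ballI impI)
  show "Par v \<subseteq> aff_lines" unfolding aff_lines_eq Par_def using assms by auto
  show "\<Union> (Par v) = UNIV" unfolding Par_def using line_self by blast
  fix l m assume "l \<in> Par v" "m \<in> Par v" "l \<noteq> m"
  then obtain a b where "l = line a v" "m = line b v" unfolding Par_def by auto
  then show "l \<inter> m = {}" using line_eq \<open>l \<noteq> m\<close> by blast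
qed



lemma sp1_mem: "z \<in> sp1 v \<longleftrightarrow> (\<exists>t. z = t *s v)" unfolding sp1_def by auto

lemma zero_sp1: "0 \<in> sp1 v" unfolding sp1_mem by (rule exI[of _ 0]) simp

lemma plane_mem: "z \<in> plane p v w \<longleftrightarrow> (\<exists>a b. z = p + a *s v + b *s w)"
  unfolding plane_def by auto

lemma line_v_sub_plane: "line r v \<subseteq> plane p v w \<longleftrightarrow> r \<in> plane p v w"
proof
  assume "line r v \<subseteq> plane p v w" then show "r \<in> plane p v w" using line_self by blast
next
  assume "r \<in> plane p v w"
  then obtain a b where r: "r = p + a *s v + b *s w" unfolding plane_mem by blast
  show "line r v \<subseteq> plane p v w"
  proof
    fix z assume "z \<in> line r v"
    then obtain t where "z = r + t *s v" unfolding line_mem by blast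
    then have "z = p + (a + t) *s v + b *s w" using r by (simp add: vector_sadd_rdistrib algebra_simps)
    then show "z \<in> plane p v w" unfolding plane_mem by blast
  qed
qed

lemma line_w_sub_plane: "line r w \<subseteq> plane p v w \<longleftrightarrow> r \<in> plane p v w"
proof
  assume "line r w \<subseteq> plane p v w" then show "r \<in> plane p v w" using line_self by blast
next
  assume "r \<in> plane p v w"
  then obtain a b where r: "r = p + a *s v + b *s w" unfolding plane_mem by blast
  show "line r w \<subseteq> plane p v w"
  proof
    fix z assume "z \<in> line r w"
    then obtain t where "z = r + t *s w" unfolding line_mem by blast
    then have "z = p + a *s v + (b + t) *s w" using r by (simp add: vector_sadd_rdistrib algebra_simps)
    then show "z \<in> plane p v w" unfolding plane_mem by blast
  qed
qed

lemma Par_disj: assumes "w \<notin> sp1 v" shows "Par v \<inter> Par w = {}"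
proof (rule ccontr)
  assume "Par v \<inter> Par w \<noteq> {}"
  then obtain a b where "line a v = line b w" unfolding Par_def by auto
  then have "w \<in> sp1 v" using line_dir by metis
  then show False using assms by simp
qed

lemma meet_card:
  fixes v :: "('a::{finite,field})^('n::finite)"
  assumes "w \<notin> sp1 v" "m \<in> Par w"
  shows "card (m \<inter> line p v) = (if m \<subseteq> plane p v w then 1 else 0)"
proof -
  obtain r where m: "m = line r w" using assms(2) unfolding Par_def by auto
  show ?thesis
  proof (cases "m \<subseteq> plane p v w")
    case True
    then have "r \<in> plane p v w" using m line_self by blast
    then obtain a b where r: "r = p + a *s v + b *s w" unfolding plane_mem by blast
    have "m \<inter> line p v = {p + a *s v}"
    proof (rule set_eqI)
      fix z show "z \<in> m \<inter> line p v \<longleftrightarrow> z \<in> {p + a *s v}"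
      proof
        assume "z \<in> m \<inter> line p v"
        then obtain a' b' where z: "z = p + a' *s v" "z = r + b' *s w" unfolding m Int_iff line_mem by blast
        have eq: "(a' - a) *s v = (b + b') *s w" using z r
          by (simp add: vector_sub_rdistrib vector_sadd_rdistrib algebra_simps)
        have "b + b' = 0"
        proof (rule ccontr)
          assume nz: "b + b' \<noteq> 0"
          have "w = (1 / (b + b')) *s ((b + b') *s w)" using nz by (simp add: vector_smult_assoc)
          also have "\<dots> = ((a' - a) / (b + b')) *s v" unfolding eq[symmetric] by (simp add: vector_smult_assoc)
          finally have "w \<in> sp1 v" unfolding sp1_mem by blast
          then show False using assms by simp
        qed
        then have "(a' - a) *s v = 0" using eq by simp
        then have "a' = a \<or> v = 0" by simp
        then show "z \<in> {p + a *s v}" using z by auto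
      next
        assume "z \<in> {p + a *s v}"
        then have z: "z = p + a *s v" by simp
        have "z = r + (- b) *s w" using r z by (simp add: vector_smult_lneg)
        then show "z \<in> m \<inter> line p v" unfolding m Int_iff line_mem using z by blast
      qed
    qed
    then show ?thesis using True by simp
  next
    case False
    have "m \<inter> line p v = {}"
    proof (rule ccontr)
      assume "m \<inter> line p v \<noteq> {}"
      then obtain z where z: "z \<in> m" "z \<in> line p v" by blast
      then obtain a where "z = p + a *s v" unfolding line_mem by blast
      then have "z = p + a *s v + 0 *s w" by simp
      then have "z \<in> plane p v w" unfolding plane_mem by blast
      moreover have "m = line z w" using line_eq z(1) m by metis
      ultimately show False using False line_w_sub_plane by metis
    qed
    then show ?thesis using False by simp
  qed
qed



lemma switch_spread:
  fixes v :: "('a::{finite,field})^('n::finite)"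
  assumes v: "v \<noteq> 0" and w: "w \<notin> sp1 v"
  shows "is_line_spread ((Par w - {m \<in> Par w. m \<subseteq> plane p v w}) \<union> {m \<in> Par v. m \<subseteq> plane p v w})"
    (is "is_line_spread ?S")
proof -
  have w0: "w \<noteq> 0" using w zero_sp1 by metis
  have sv: "is_line_spread (Par v)" and sw: "is_line_spread (Par w)" using Par_spread v w0 by auto
  show ?thesis unfolding is_line_spread_def
  proof (intro conjI ballI impI)
    have "Par v \<subseteq> aff_lines" "Par w \<subseteq> aff_lines" using sv sw unfolding is_line_spread_def by simp_all
    then show "?S \<subseteq> aff_lines" by blast
    show "\<Union> ?S = UNIV"
    proof (rule set_eqI, rule iffI)
      fix y :: "'a^'n" show "y \<in> \<Union> ?S"
      proof (cases "y \<in> plane p v w")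
        case True
        then obtain a b where y: "y = p + a *s v + b *s w" unfolding plane_mem by blast
        have "p + b *s w = p + 0 *s v + b *s w" by simp
        then have "p + b *s w \<in> plane p v w" unfolding plane_mem by blast
        then have "line (p + b *s w) v \<in> {m \<in> Par v. m \<subseteq> plane p v w}"
          using line_v_sub_plane unfolding Par_def by blast
        moreover have "y \<in> line (p + b *s w) v" unfolding line_mem y by (rule exI[of _ a]) (simp add: algebra_simps)
        ultimately show ?thesis by blast
      next
        case False
        then have "line y w \<in> Par w - {m \<in> Par w. m \<subseteq> plane p v w}"
          using line_self unfolding Par_def by blast
        then show ?thesis using line_self by blast
      qed
    qed simp
    fix l m assume l: "l \<in> ?S" and m: "m \<in> ?S" and lm: "l \<noteq> m"
    show "l \<inter> m = {}"
    proof (rule ccontr)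
      assume "l \<inter> m \<noteq> {}"
      then obtain z where z: "z \<in> l" "z \<in> m" by blast
      have PwPw: "\<And>a b. a \<in> Par w \<Longrightarrow> b \<in> Par w \<Longrightarrow> a \<noteq> b \<Longrightarrow> a \<inter> b = {}"
        using sw unfolding is_line_spread_def by blast
      have PvPv: "\<And>a b. a \<in> Par v \<Longrightarrow> b \<in> Par v \<Longrightarrow> a \<noteq> b \<Longrightarrow> a \<inter> b = {}"
        using sv unfolding is_line_spread_def by blast
      have mixed: False if a: "a \<in> Par w" "\<not> a \<subseteq> plane p v w" and b: "b \<subseteq> plane p v w" and "z \<in> a" "z \<in> b" for a b
      proof -
        obtain r where "a = line r w" using a unfolding Par_def by auto
        then have "a = line z w" using line_eq \<open>z \<in> a\<close> by metis
        moreover have "z \<in> plane p v w" using b \<open>z \<in> b\<close> by blast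
        ultimately show False using a(2) line_w_sub_plane by metis
      qed
      from l show False
      proof
        assume l1: "l \<in> Par w - {m \<in> Par w. m \<subseteq> plane p v w}"
        from m show False
        proof
          assume "m \<in> Par w - {m \<in> Par w. m \<subseteq> plane p v w}"
          then show False using PwPw[of l m] l1 lm z by blast
        next
          assume "m \<in> {m \<in> Par v. m \<subseteq> plane p v w}"
          then show False using mixed[of l m] l1 z by blast
        qed
      next
        assume l1: "l \<in> {m \<in> Par v. m \<subseteq> plane p v w}"
        from m show False
        proof
          assume "m \<in> Par w - {m \<in> Par w. m \<subseteq> plane p v w}"
          then show False using mixed[of m l] l1 z by blast
        next
          assume "m \<in> {m \<in> Par v. m \<subseteq> plane p v w}"
          then show False using PvPv[of l m] l1 lm z by blast
        qed
      qed
    qed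
  qed
qed

lemma switch_card:
  fixes v :: "('a::{finite,field})^('n::finite)" and L :: "('a^'n) set set"
  assumes v: "v \<noteq> 0" and w: "w \<notin> sp1 v"
    and sp: "\<forall>S. is_line_spread S \<longrightarrow> card (L \<inter> S) = x"
  shows "card (L \<inter> {m \<in> Par w. m \<subseteq> plane p v w}) = card (L \<inter> {m \<in> Par v. m \<subseteq> plane p v w})"
proof -
  let ?A = "{m \<in> Par w. m \<subseteq> plane p v w}" and ?B = "{m \<in> Par v. m \<subseteq> plane p v w}"
  have w0: "w \<noteq> 0" using w zero_sp1 by metis
  have x1: "card (L \<inter> Par w) = x" using sp Par_spread w0 by blast
  have x2: "card (L \<inter> ((Par w - ?A) \<union> ?B)) = x" using sp switch_spread[OF v w] by blast
  have "L \<inter> ((Par w - ?A) \<union> ?B) = (L \<inter> Par w - L \<inter> ?A) \<union> (L \<inter> ?B)" by blast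
  moreover have "(L \<inter> Par w - L \<inter> ?A) \<inter> (L \<inter> ?B) = {}" using Par_disj[OF w] by blast
  ultimately have "card (L \<inter> ((Par w - ?A) \<union> ?B)) = card (L \<inter> Par w - L \<inter> ?A) + card (L \<inter> ?B)"
    by (simp add: card_Un_disjoint)
  moreover have "card (L \<inter> Par w - L \<inter> ?A) = card (L \<inter> Par w) - card (L \<inter> ?A)"
    by (rule card_Diff_subset) auto
  moreover have "card (L \<inter> ?A) \<le> card (L \<inter> Par w)" by (rule card_mono) auto
  ultimately show ?thesis using x1 x2 by linarith
qed


lemma card_compl_sp1:
  fixes v :: "('a::{finite,field})^('n::finite)"
  assumes "v \<noteq> 0"
  shows "card (- sp1 v) = CARD('a) ^ CARD('n) - CARD('a)"
  using card_sp1[OF assms] by (simp add: Compl_eq_Diff_UNIV card_Diff_subset)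

lemma count_planes:
  fixes v :: "('a::{finite,field})^('n::finite)"
  assumes v: "v \<noteq> 0" and u: "r - p \<notin> sp1 v"
  shows "card {w. w \<notin> sp1 v \<and> r \<in> plane p v w} = CARD('a) * (CARD('a) - 1)"
proof -
  define u where "u = r - p"
  have u': "u \<notin> sp1 v" using u u_def by simp
  have eq: "{w. w \<notin> sp1 v \<and> r \<in> plane p v w} = (\<lambda>(a,b). a *s v + b *s u) ` (UNIV \<times> - {0})"
  proof (rule set_eqI, rule iffI)
    fix w assume "w \<in> {w. w \<notin> sp1 v \<and> r \<in> plane p v w}"
    then have wn: "w \<notin> sp1 v" and "r \<in> plane p v w" by auto
    then obtain a b where "r = p + a *s v + b *s w" unfolding plane_mem by blast
    then have ueq: "u = a *s v + b *s w" unfolding u_def by (simp add: algebra_simps)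
    have b: "b \<noteq> 0"
    proof
      assume "b = 0" then have "u \<in> sp1 v" using ueq unfolding sp1_mem by auto
      then show False using u' by simp
    qed
    have "(-a / b) *s v + (1 / b) *s u = w" unfolding ueq using b
      by (simp add: vector_add_ldistrib vector_smult_assoc vector_sadd_rdistrib[symmetric])
    then show "w \<in> (\<lambda>(a,b). a *s v + b *s u) ` (UNIV \<times> - {0})"
      using b by (auto intro!: image_eqI[where x="(-a / b, 1 / b)"])
  next
    fix w assume "w \<in> (\<lambda>(a,b). a *s v + b *s u) ` (UNIV \<times> - {0})"
    then obtain a b where b: "b \<noteq> 0" and weq: "w = a *s v + b *s u" by auto
    have "w \<notin> sp1 v"
    proof
      assume "w \<in> sp1 v"
      then obtain t where "w = t *s v" unfolding sp1_mem by blast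
      then have "b *s u = (t - a) *s v" using weq by (simp add: vector_sub_rdistrib algebra_simps)
      then have "(1 / b) *s (b *s u) = ((t - a) / b) *s v" by (simp add: vector_smult_assoc)
      then have "u = ((t - a) / b) *s v" using b by (simp add: vector_smult_assoc)
      then show False using u' unfolding sp1_mem by blast
    qed
    moreover have "(-a / b) *s v + (1 / b) *s w = u" unfolding weq using b
      by (simp add: vector_add_ldistrib vector_smult_assoc vector_sadd_rdistrib[symmetric])
    then have "r = p + (-a / b) *s v + (1 / b) *s w" unfolding u_def by (simp add: algebra_simps)
    then have "r \<in> plane p v w" unfolding plane_mem by blast
    ultimately show "w \<in> {w. w \<notin> sp1 v \<and> r \<in> plane p v w}" by simp
  qed
  have inj: "inj_on (\<lambda>(a,b). a *s v + b *s u) (UNIV \<times> - {0::'a})"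
  proof (rule inj_onI)
    fix x y :: "'a \<times> 'a"
    assume "x \<in> UNIV \<times> - {0}" "y \<in> UNIV \<times> - {0}"
      and exy: "(\<lambda>(a,b). a *s v + b *s u) x = (\<lambda>(a,b). a *s v + b *s u) y"
    obtain a b where x: "x = (a, b)" by (cases x)
    obtain a' b' where y: "y = (a', b')" by (cases y)
    have e: "a *s v + b *s u = a' *s v + b' *s u" using exy x y by simp
    have bb: "b = b'"
    proof (rule ccontr)
      assume nz: "b \<noteq> b'"
      have "(b - b') *s u = (a' - a) *s v" using e by (simp add: vector_sub_rdistrib algebra_simps)
      then have "(1 / (b - b')) *s ((b - b') *s u) = ((a' - a) / (b - b')) *s v" by (simp add: vector_smult_assoc)
      then have "u = ((a' - a) / (b - b')) *s v" using nz by (simp add: vector_smult_assoc)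
      then show False using u' unfolding sp1_mem by blast
    qed
    then have "a *s v = a' *s v" using e by simp
    then have "a = a'" using v by simp
    then show "x = y" using x y bb by simp
  qed
  have "card ((UNIV::'a set) \<times> - {0::'a}) = CARD('a) * (CARD('a) - 1)"
    by (simp add: card_cartesian_product Compl_eq_Diff_UNIV card_Diff_singleton)
  then show ?thesis unfolding eq using card_image[OF inj] by simp
qed



lemma sum_if_count: "finite A \<Longrightarrow> (\<Sum>w\<in>A. if P w then (c::nat) else 0) = card {w\<in>A. P w} * c"
  by (simp add: sum.If_cases Int_def)

lemma arith1: "(x::nat) \<ge> 1 \<Longrightarrow> k * (q * 1) + (D + (x - 1) * (q * k)) = D * 1 + q * k * x"
  by (cases x) (auto simp: algebra_simps)

lemma arith0: "(k::nat) * (q * 0) + x * (q * k) = D * 0 + q * k * x"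
  by (simp add: algebra_simps)

lemma main_identity:
  fixes v :: "('a::{finite,field})^('n::finite)" and L :: "('a^'n) set set"
  assumes Lsub: "L \<subseteq> aff_lines" and v: "v \<noteq> 0"
    and sp: "\<forall>S. is_line_spread S \<longrightarrow> card (L \<inter> S) = x"
  shows "(CARD('a) - 1) * (\<Sum>m\<in>L. card (m \<inter> line p v))
     = (CARD('a) ^ CARD('n) - CARD('a)) * (if line p v \<in> L then 1 else 0) + CARD('a) * (CARD('a) - 1) * x"
proof -
  let ?q = "CARD('a)" and ?l = "line p v"
  define h where "h m = card (m \<inter> ?l)" for m
  define W where "W = {w::'a^'n. w \<noteq> 0}"
  define g where "g w = (\<Sum>m\<in>L \<inter> Par w. h m)" for w
  have xv: "card (L \<inter> Par v) = x" using sp Par_spread v by blast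
  have lPar: "?l \<in> Par v" unfolding Par_def by auto
  have dirs: "card {w\<in>W. m \<in> Par w} = ?q - 1" if mL: "m \<in> L" for m
  proof -
    obtain p' u where "m = line p' u" "u \<noteq> 0" using mL Lsub unfolding aff_lines_eq by blast
    then show ?thesis using card_dirs[of u p'] unfolding W_def by simp
  qed
  have "(?q - 1) * (\<Sum>m\<in>L. h m) = (\<Sum>m\<in>L. card {w\<in>W. m \<in> Par w} * h m)"
    by (simp add: sum_distrib_left dirs)
  also have "\<dots> = (\<Sum>m\<in>L. \<Sum>w\<in>W. if m \<in> Par w then h m else 0)"
    by (simp add: sum_if_count)
  also have "\<dots> = (\<Sum>w\<in>W. \<Sum>m\<in>L. if m \<in> Par w then h m else 0)"
    by (rule sum.swap)
  also have "\<dots> = (\<Sum>w\<in>W. g w)"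
    unfolding g_def by (simp add: sum.inter_restrict)
  also have "\<dots> = (\<Sum>w\<in>sp1 v - {0}. g w) + (\<Sum>w\<in>- sp1 v. g w)"
  proof -
    have "W = (sp1 v - {0}) \<union> (- sp1 v)" unfolding W_def using zero_sp1[of v] by blast
    moreover have "sum g ((sp1 v - {0}) \<union> (- sp1 v)) = sum g (sp1 v - {0}) + sum g (- sp1 v)"
      by (rule sum.union_disjoint) auto
    ultimately show ?thesis by simp
  qed
  finally have step1: "(?q - 1) * (\<Sum>m\<in>L. h m) = (\<Sum>w\<in>sp1 v - {0}. g w) + (\<Sum>w\<in>- sp1 v. g w)" .
  have hPar: "h m = (if m = ?l then ?q else 0)" if mP: "m \<in> Par v" for m
  proof (cases "m = ?l")
    case True then show ?thesis unfolding h_def using line_card[OF v] by simp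
  next
    case False
    obtain r where r: "m = line r v" using mP unfolding Par_def by auto
    have "m \<inter> ?l = {}"
    proof (rule ccontr)
      assume "m \<inter> ?l \<noteq> {}"
      then obtain z where "z \<in> m" "z \<in> ?l" by blast
      then have "line z v = m" "line z v = ?l" using line_eq r by metis+
      then show False using False by simp
    qed
    then show ?thesis unfolding h_def using False by simp
  qed
  have g0: "g w = ?q * (if ?l \<in> L then 1 else 0)" if wW: "w \<in> sp1 v - {0}" for w
  proof -
    have "w \<in> sp1 v" "w \<noteq> 0" using wW by auto
    then obtain t where t: "w = t *s v" "t \<noteq> 0" unfolding sp1_mem by auto
    have "Par w = Par v" using t Par_scale by simp
    then have "g w = (\<Sum>m\<in>L \<inter> Par v. if m = ?l then ?q else 0)"
      unfolding g_def using hPar by (intro sum.cong) auto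
    also have "\<dots> = (if ?l \<in> L \<inter> Par v then ?q else 0)" by (simp add: sum.delta)
    finally show ?thesis using lPar by simp
  qed
  have card_W1: "card (sp1 v - {0}) = ?q - 1"
    using card_sp1[OF v] zero_sp1[of v] by (simp add: card_Diff_singleton)
  have part1: "(\<Sum>w\<in>sp1 v - {0}. g w) = (?q - 1) * (?q * (if ?l \<in> L then 1 else 0))"
    using g0 card_W1 by simp
  have g2: "g w = (\<Sum>m\<in>L \<inter> Par v. if m \<subseteq> plane p v w then 1 else 0)" if "w \<in> - sp1 v" for w
  proof -
    have wn: "w \<notin> sp1 v" using that by simp
    have "g w = (\<Sum>m\<in>L \<inter> Par w. if m \<subseteq> plane p v w then 1 else 0)"
      unfolding g_def h_def using meet_card[OF wn] by (intro sum.cong) auto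
    also have "\<dots> = card {m \<in> L \<inter> Par w. m \<subseteq> plane p v w}" by (simp add: sum_if_count)
    also have "\<dots> = card (L \<inter> {m \<in> Par w. m \<subseteq> plane p v w})" by (rule arg_cong[where f=card]) blast
    also have "\<dots> = card (L \<inter> {m \<in> Par v. m \<subseteq> plane p v w})" by (rule switch_card[OF v wn sp])
    also have "\<dots> = card {m \<in> L \<inter> Par v. m \<subseteq> plane p v w}" by (rule arg_cong[where f=card]) blast
    also have "\<dots> = (\<Sum>m\<in>L \<inter> Par v. if m \<subseteq> plane p v w then 1 else 0)" by (simp add: sum_if_count)
    finally show ?thesis .
  qed
  have cnt: "card {w \<in> - sp1 v. m \<subseteq> plane p v w} =
      (if m = ?l then ?q ^ CARD('n) - ?q else ?q * (?q - 1))" if mP: "m \<in> Par v" for m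
  proof -
    obtain r where r: "m = line r v" using mP unfolding Par_def by auto
    have "{w \<in> - sp1 v. m \<subseteq> plane p v w} = {w. w \<notin> sp1 v \<and> r \<in> plane p v w}"
      unfolding r line_v_sub_plane by auto
    show ?thesis
    proof (cases "m = ?l")
      case True
      have "p \<in> plane p v w" for w unfolding plane_mem by (rule exI[of _ 0], rule exI[of _ 0]) simp
      then have "{w \<in> - sp1 v. m \<subseteq> plane p v w} = - sp1 v" unfolding True line_v_sub_plane by auto
      then show ?thesis using True card_compl_sp1[OF v] by simp
    next
      case False
      have "r - p \<notin> sp1 v"
      proof
        assume "r - p \<in> sp1 v"
        then obtain t where "r - p = t *s v" unfolding sp1_mem by blast
        then have "r \<in> ?l" unfolding line_mem by (metis add.commute diff_add_cancel)
        then have "m = ?l" using r line_eq by metis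
        then show False using False by simp
      qed
      then show ?thesis using count_planes[OF v] False
        \<open>{w \<in> - sp1 v. m \<subseteq> plane p v w} = {w. w \<notin> sp1 v \<and> r \<in> plane p v w}\<close> by simp
    qed
  qed
  have "(\<Sum>w\<in>- sp1 v. g w) = (\<Sum>w\<in>- sp1 v. \<Sum>m\<in>L \<inter> Par v. if m \<subseteq> plane p v w then 1 else 0)"
    using g2 by simp
  also have "\<dots> = (\<Sum>m\<in>L \<inter> Par v. \<Sum>w\<in>- sp1 v. if m \<subseteq> plane p v w then 1 else 0)"
    by (rule sum.swap)
  also have "\<dots> = (\<Sum>m\<in>L \<inter> Par v. card {w \<in> - sp1 v. m \<subseteq> plane p v w})"
    by (simp add: sum_if_count)
  also have "\<dots> = (\<Sum>m\<in>L \<inter> Par v. if m = ?l then ?q ^ CARD('n) - ?q else ?q * (?q - 1))"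
    using cnt by (intro sum.cong) auto
  finally have part2: "(\<Sum>w\<in>- sp1 v. g w) = (\<Sum>m\<in>L \<inter> Par v. if m = ?l then ?q ^ CARD('n) - ?q else ?q * (?q - 1))" .
  show ?thesis
  proof (cases "?l \<in> L")
    case True
    then have lin: "?l \<in> L \<inter> Par v" using lPar by simp
    then have x1: "x \<ge> 1" using xv by (metis card_0_eq finite empty_iff less_one not_le)
    have "(\<Sum>m\<in>L \<inter> Par v. if m = ?l then ?q ^ CARD('n) - ?q else ?q * (?q - 1))
        = (?q ^ CARD('n) - ?q) + (\<Sum>m\<in>L \<inter> Par v - {?l}. if m = ?l then ?q ^ CARD('n) - ?q else ?q * (?q - 1))"
      using lin by (simp add: sum.remove)
    also have "\<dots> = (?q ^ CARD('n) - ?q) + (x - 1) * (?q * (?q - 1))"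
      using xv lin by (simp add: card_Diff_singleton)
    finally have p2: "(\<Sum>w\<in>- sp1 v. g w) = (?q ^ CARD('n) - ?q) + (x - 1) * (?q * (?q - 1))" using part2 by simp
    show ?thesis using step1 unfolding h_def part1 p2 if_P[OF True] arith1[OF x1] .
  next
    case False
    then have "(\<Sum>m\<in>L \<inter> Par v. if m = ?l then ?q ^ CARD('n) - ?q else ?q * (?q - 1))
        = (\<Sum>m\<in>L \<inter> Par v. ?q * (?q - 1))" by (intro sum.cong) auto
    then have p2: "(\<Sum>w\<in>- sp1 v. g w) = x * (?q * (?q - 1))" using part2 xv by simp
    have "(?q - 1) * (\<Sum>m\<in>L. card (m \<inter> ?l)) = (?q - 1) * (?q * 0) + x * (?q * (?q - 1))"
      using step1 unfolding h_def part1 p2 if_not_P[OF False] .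
    then show ?thesis unfolding if_not_P[OF False] by (rule trans) (rule arith0)
  qed
qed



lemma card_field_ge2: "CARD('a::{finite,field}) \<ge> 2"
proof -
  have "card {0::'a, 1} \<le> CARD('a)" by (rule card_mono) auto
  then show ?thesis by simp
qed

lemma deg_sum:
  fixes L :: "('a::{finite,field}^'n::finite) set set"
  shows "(\<Sum>P\<in>l. card {m\<in>L. P \<in> m}) = (\<Sum>m\<in>L. card (m \<inter> l))"
proof -
  have "(\<Sum>P\<in>l. card {m\<in>L. P \<in> m}) = (\<Sum>P\<in>l. \<Sum>m\<in>L. if P \<in> m then 1 else 0)"
    by (simp add: sum_if_count)
  also have "\<dots> = (\<Sum>m\<in>L. \<Sum>P\<in>l. if P \<in> m then 1 else 0)" by (rule sum.swap)
  also have "\<dots> = (\<Sum>m\<in>L. card (m \<inter> l))"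
    by (intro sum.cong refl) (simp add: sum_if_count Int_def conj_commute)
  finally show ?thesis .
qed

theorem theorem5p1:
  fixes L :: "(('a::{finite,field}) ^ ('n::finite)) set set" and x :: nat
  assumes "CARD('n) \<ge> 3"
    and "L \<subseteq> aff_lines"
    and "\<forall>S. is_line_spread S \<longrightarrow> card (L \<inter> S) = x"
  shows "CL_line_class L \<and> CL_parameter L = real x"
proof -
  let ?q = "CARD('a)" and ?N = "CARD('n)"
  have q2: "?q \<ge> 2" by (rule card_field_ge2)
  have qN: "?q ^ ?N > ?q"
  proof -
    have "?q ^ 1 < ?q ^ ?N" using q2 assms(1) by (intro power_strict_increasing) auto
    then show ?thesis by simp
  qed
  define D where "D = ?q ^ ?N - ?q"
  have Dpos: "real D > 0" using qN unfolding D_def by simp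
  define c where "c P = (real (?q - 1) * real (card {m\<in>L. P \<in> m}) - real (?q - 1) * real x) / real D" for P :: "'a^'n"
  have CL: "\<forall>l\<in>aff_lines. (if l \<in> L then 1 else 0) = (\<Sum>P\<in>UNIV. incid P l * c P)"
  proof
    fix l :: "('a^'n) set" assume "l \<in> aff_lines"
    then obtain p v where l: "l = line p v" and v: "v \<noteq> 0" unfolding aff_lines_eq by blast
    have mi: "(?q - 1) * (\<Sum>m\<in>L. card (m \<inter> l)) = D * (if l \<in> L then 1 else 0) + ?q * (?q - 1) * x"
      using main_identity[OF assms(2) v assms(3), of p] unfolding l D_def .
    then have mir: "real (?q - 1) * real (\<Sum>m\<in>L. card (m \<inter> l)) = real D * (if l \<in> L then 1 else 0) + real ?q * real (?q - 1) * real x"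
    proof -
      have m2: "real ((?q - 1) * (\<Sum>m\<in>L. card (m \<inter> l))) = real (D * (if l \<in> L then 1 else 0) + ?q * (?q - 1) * x)"
        using mi by (rule arg_cong)
      have "real (if l \<in> L then 1 else 0) = (if l \<in> L then 1 else 0)" by simp
      then show ?thesis using m2 unfolding of_nat_add of_nat_mult by simp
    qed
    have "(\<Sum>P\<in>UNIV. incid P l * c P) = (\<Sum>P\<in>l. c P)"
    proof -
      have "(\<lambda>P. incid P l * c P) = (\<lambda>P. if P \<in> l then c P else 0)" by (auto simp: incid_def)
      then show ?thesis using sum.inter_restrict[of UNIV c l] by (simp only: finite Int_UNIV_left simp_thms)
    qed
    also have "\<dots> = (real (?q - 1) * real (\<Sum>P\<in>l. card {m\<in>L. P \<in> m}) - real ?q * real (?q - 1) * real x) / real D"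
    proof -
      let ?A = "real (?q - 1)"
      have "(\<Sum>P\<in>l. c P) = (\<Sum>P\<in>l. ?A * real (card {m\<in>L. P \<in> m}) - ?A * real x) / real D"
        unfolding c_def by (rule sum_divide_distrib[symmetric])
      also have "(\<Sum>P\<in>l. ?A * real (card {m\<in>L. P \<in> m}) - ?A * real x)
          = ?A * (\<Sum>P\<in>l. real (card {m\<in>L. P \<in> m})) - real (card l) * (?A * real x)"
        by (simp only: sum_subtractf sum_distrib_left sum_constant of_nat_id)
      also have "(\<Sum>P\<in>l. real (card {m\<in>L. P \<in> m})) = real (\<Sum>P\<in>l. card {m\<in>L. P \<in> m})"
        by (rule of_nat_sum[symmetric])
      also have "card l = ?q" using line_card[OF v, of p] l by simp
      finally show ?thesis by (simp add: mult.commute mult.left_commute)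
    qed
    also have "\<dots> = (if l \<in> L then 1 else 0)"
      unfolding deg_sum mir using Dpos by (cases "l \<in> L") simp_all
    finally show "(if l \<in> L then 1 else 0) = (\<Sum>P\<in>UNIV. incid P l * c P)" by simp
  qed
  define W where "W = {w::'a^'n. w \<noteq> 0}"
  have dirs: "card {w\<in>W. m \<in> Par w} = ?q - 1" if mL: "m \<in> L" for m
  proof -
    obtain p' u where "m = line p' u" "u \<noteq> 0" using mL assms(2) unfolding aff_lines_eq by blast
    then show ?thesis using card_dirs[of u p'] unfolding W_def by simp
  qed
  have "(?q - 1) * card L = (\<Sum>m\<in>L. card {w\<in>W. m \<in> Par w})"
    using dirs by simp
  also have "\<dots> = (\<Sum>m\<in>L. \<Sum>w\<in>W. if m \<in> Par w then 1 else 0)"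
    by (simp add: sum_if_count)
  also have "\<dots> = (\<Sum>w\<in>W. \<Sum>m\<in>L. if m \<in> Par w then 1 else 0)" by (rule sum.swap)
  also have "\<dots> = (\<Sum>w\<in>W. card (L \<inter> Par w))"
    by (intro sum.cong refl) (simp add: sum_if_count Int_def)
  also have "\<dots> = (\<Sum>w\<in>W. x)"
    using assms(3) Par_spread unfolding W_def by (intro sum.cong refl) auto
  also have "\<dots> = (?q ^ ?N - 1) * x"
  proof -
    have "W = UNIV - {0}" unfolding W_def by auto
    then have "card W = ?q ^ ?N - 1" by (simp add: card_Diff_singleton)
    then show ?thesis by simp
  qed
  finally have par: "(?q - 1) * card L = (?q ^ ?N - 1) * x" .
  have q1: "real (?q - 1) = real ?q - 1" using q2 by simp
  have qN1: "real (?q ^ ?N - 1) = real ?q ^ ?N - 1" using qN by (simp add: of_nat_diff)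
  have "real (card L) * (real ?q - 1) = (real ?q ^ ?N - 1) * real x"
    using arg_cong[OF par, of real] unfolding of_nat_mult q1 qN1 by (simp add: mult.commute)
  moreover have "real ?q ^ ?N - 1 > 0" using qN
  proof -
    have "1 < ?q ^ ?N" using qN q2 by linarith
    then have "real 1 < real (?q ^ ?N)" by (simp only: of_nat_less_iff)
    then show ?thesis by simp
  qed
  ultimately have "CL_parameter L = real x" unfolding CL_parameter_def by (simp add: field_simps)
  moreover have "CL_line_class L" unfolding CL_line_class_def using assms(2) CL by blast
  ultimately show ?thesis by simp
qed

end
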